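(* Let $q$ be a prime power. For arbitrary $u,v\in\mathbb{F}_q^3$, $|\widetilde{E}(u)\cap\widetilde{E}(v)|=(q-1)\,\rho_q(u,v)$.
   Context: $\mathbb{F}_q$ is the finite field with $q$ elements. Hamming distance $d(u,v)=|\{i:u_i\ne v_i\}|$ on $\mathbb{F}_q^3$; $B(u)=\{v:d(u,v)\le1\}$; $E(u)=\bigcup_{\lambda\in\mathbb{F}_q}B(\lambda u)$. $\mathcal{D}_q=\{(u_1,u_2,u_3)\in\mathbb{F}_q^3: u_1,u_2,u_3 \text{ pairwise distinct and nonzero}\}$, $\widetilde{B}(u)=B(u)\cap\mathcal{D}_q$, $\widetilde{E}(u)=E(u)\cap\mathcal{D}_q$. For $u,v\in\mathbb{F}_q^3$, $\rho_q(u,v)=0$ if $|\widetilde{E}(u)|=0$ or $|\widetilde{E}(v)|=0$, and otherwise $\rho_q(u,v)=\sum_{\mu\in\mathbb{F}_q^*}|\widetilde{B}(u)\cap\widetilde{B}(\mu v)|$. *)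

theory Defs
  imports "HOL-Analysis.Analysis"
begin

text \<open>Vectors of F_q^3 are modelled as 'a^3 for a finite field 'a (q = CARD('a)).\<close>

definition hdist :: "'a ^ 3 \<Rightarrow> 'a ^ 3 \<Rightarrow> nat" where
  "hdist u v = card {i. u $ i \<noteq> v $ i}"

definition smul :: "'a::times \<Rightarrow> 'a ^ 3 \<Rightarrow> 'a ^ 3" where
  "smul c u = (\<chi> i. c * u $ i)"

definition ball1 :: "'a ^ 3 \<Rightarrow> ('a ^ 3) set" where
  "ball1 u = {v. hdist u v \<le> 1}"

definition Eset :: "'a::times ^ 3 \<Rightarrow> ('a ^ 3) set" where
  "Eset u = (\<Union>c\<in>UNIV. ball1 (smul c u))"

definition Dq :: "('a::zero ^ 3) set" where
  "Dq = {u. (\<forall>i. u $ i \<noteq> 0) \<and> (\<forall>i j. i \<noteq> j \<longrightarrow> u $ i \<noteq> u $ j)}"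

definition Bt :: "'a::zero ^ 3 \<Rightarrow> ('a ^ 3) set" where
  "Bt u = ball1 u \<inter> Dq"

definition Et :: "'a::{times,zero} ^ 3 \<Rightarrow> ('a ^ 3) set" where
  "Et u = Eset u \<inter> Dq"

definition rho :: "'a::{field,finite} ^ 3 \<Rightarrow> 'a ^ 3 \<Rightarrow> nat" where
  "rho u v = (if card (Et u) = 0 \<or> card (Et v) = 0 then 0
              else (\<Sum>\<mu>\<in>UNIV - {0}. card (Bt u \<inter> Bt (smul \<mu> v))))"

end

theory Submission
  imports Defs
begin

lemma smul_smul: "smul c (smul d u) = smul (c*d) (u::'a::field^3)"
  by (simp add: smul_def vec_eq_iff mult.assoc)

lemma smul_one: "smul 1 (u::'a::field^3) = u"
  by (simp add: smul_def vec_eq_iff)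

lemma hdist_smul: "(c::'a::field) \<noteq> 0 \<Longrightarrow> hdist (smul c u) (smul c w) = hdist u w"
  by (simp add: hdist_def smul_def)

lemma Dq_smul: "(c::'a::field) \<noteq> 0 \<Longrightarrow> (smul c w \<in> Dq) = (w \<in> Dq)"
  by (simp add: Dq_def smul_def)

lemma Bt_smul: assumes "(c::'a::field) \<noteq> 0" shows "Bt (smul c u) = smul c ` Bt u"
proof
  show "Bt (smul c u) \<subseteq> smul c ` Bt u"
  proof
    fix w assume w: "w \<in> Bt (smul c u)"
    have "w = smul c (smul (inverse c) w)" using assms by (simp add: smul_smul smul_one)
    moreover have "smul (inverse c) w \<in> Bt u"
      using w assms hdist_smul[of "inverse c" "smul c u" w] Dq_smul[of "inverse c" w]
      by (simp add: Bt_def ball1_def smul_smul smul_one)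
    ultimately show "w \<in> smul c ` Bt u" by blast
  qed
next
  show "smul c ` Bt u \<subseteq> Bt (smul c u)"
    using assms by (auto simp: Bt_def ball1_def hdist_smul Dq_smul)
qed

lemma Bt_zero: "Bt (smul 0 (u::'a::field^3)) = {}"
proof -
  { fix w :: "'a^3" assume w: "w \<in> Dq" "hdist (smul 0 u) w \<le> 1"
    have "{i. smul 0 u $ i \<noteq> w $ i} = UNIV" using w(1) by (auto simp: Dq_def smul_def)
    hence False using w(2) by (simp add: hdist_def) }
  thus ?thesis by (auto simp: Bt_def ball1_def)
qed

lemma Bt_disj: assumes "(c::'a::field) \<noteq> d" shows "Bt (smul c u) \<inter> Bt (smul d u) = {}"
proof (rule ccontr)
  assume "Bt (smul c u) \<inter> Bt (smul d u) \<noteq> {}"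
  then obtain w where w: "w \<in> Dq" "hdist (smul c u) w \<le> 1" "hdist (smul d u) w \<le> 1"
    by (auto simp: Bt_def ball1_def)
  let ?X = "{i. smul c u $ i \<noteq> w $ i}" and ?Y = "{i. smul d u $ i \<noteq> w $ i}"
  have "card (?X \<union> ?Y) \<le> card ?X + card ?Y" by (rule card_Un_le)
  also have "\<dots> \<le> 2" using w by (simp add: hdist_def)
  finally have "card (?X \<union> ?Y) < card (UNIV :: 3 set)" by simp
  hence "?X \<union> ?Y \<noteq> UNIV" by auto
  then obtain i where i: "i \<notin> ?X" "i \<notin> ?Y" by blast
  hence "c * u $ i = d * u $ i" by (simp add: smul_def)
  hence "(c - d) * u $ i = 0" by (simp add: algebra_simps)
  hence "u $ i = 0" using assms by simp
  hence "w $ i = 0" using i by (simp add: smul_def)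
  thus False using w(1) by (simp add: Dq_def)
qed

lemma Et_eq: "Et u = (\<Union>c\<in>UNIV - {0}. Bt (smul c (u::'a::field^3)))"
proof -
  have "Et u = (\<Union>c\<in>UNIV. Bt (smul c u))" by (auto simp: Et_def Eset_def Bt_def)
  also have "\<dots> = (\<Union>c\<in>UNIV - {0}. Bt (smul c u))" using Bt_zero[of u] by blast
  finally show ?thesis .
qed

theorem corollary10:
  fixes u v :: "'a::{field,finite} ^ 3"
  shows "card (Et u \<inter> Et v) = (CARD('a) - 1) * rho u v"
proof (cases "card (Et u) = 0 \<or> card (Et v) = 0")
  case True
  hence "Et u = {} \<or> Et v = {}" by simp
  thus ?thesis using True by (auto simp: rho_def)
next
  case False
  let ?S = "UNIV - {0::'a}"
  let ?f = "\<lambda>\<mu>. card (Bt u \<inter> Bt (smul \<mu> v))"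
  have eq: "Et u \<inter> Et v = (\<Union>c\<in>?S. \<Union>d\<in>?S. Bt (smul c u) \<inter> Bt (smul d v))"
    unfolding Et_eq by blast
  have inner: "card (\<Union>d\<in>?S. Bt (smul c u) \<inter> Bt (smul d v))
      = (\<Sum>d\<in>?S. card (Bt (smul c u) \<inter> Bt (smul d v)))" for c
    by (rule card_UN_disjoint) (use Bt_disj[of _ _ v] in auto)
  have "card (Et u \<inter> Et v) = (\<Sum>c\<in>?S. card (\<Union>d\<in>?S. Bt (smul c u) \<inter> Bt (smul d v)))"
    unfolding eq by (rule card_UN_disjoint) (use Bt_disj[of _ _ u] in auto)
  also have "\<dots> = (\<Sum>c\<in>?S. \<Sum>d\<in>?S. card (Bt (smul c u) \<inter> Bt (smul d v)))"
    using inner by simp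
  also have "\<dots> = (\<Sum>c\<in>?S. \<Sum>\<mu>\<in>?S. ?f \<mu>)"
  proof (rule sum.cong[OF refl])
    fix c assume c: "c \<in> ?S"
    have bij: "bij_betw (\<lambda>\<mu>. c * \<mu>) ?S ?S"
    proof -
      have "x \<in> (\<lambda>\<mu>. c * \<mu>) ` ?S" if "x \<in> ?S" for x
        using c that by (intro image_eqI[of _ _ "inverse c * x"]) auto
      thus ?thesis using c by (auto simp: bij_betw_def inj_on_def)
    qed
    have "(\<Sum>d\<in>?S. card (Bt (smul c u) \<inter> Bt (smul d v)))
        = (\<Sum>\<mu>\<in>?S. card (Bt (smul c u) \<inter> Bt (smul (c*\<mu>) v)))"
      using sum.reindex_bij_betw[OF bij, of "\<lambda>d. card (Bt (smul c u) \<inter> Bt (smul d v))"] by simp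
    also have "\<dots> = (\<Sum>\<mu>\<in>?S. ?f \<mu>)"
    proof (rule sum.cong[OF refl])
      fix \<mu> assume "\<mu> \<in> ?S"
      have inj: "inj (smul c :: 'a^3 \<Rightarrow> _)"
        using c by (auto simp: inj_def smul_def vec_eq_iff)
      have "Bt (smul c u) \<inter> Bt (smul (c*\<mu>) v) = smul c ` (Bt u \<inter> Bt (smul \<mu> v))"
        using c by (simp add: Bt_smul smul_smul[symmetric] image_Int[OF inj])
      thus "card (Bt (smul c u) \<inter> Bt (smul (c*\<mu>) v)) = ?f \<mu>"
        using card_image[OF inj_on_subset[OF inj subset_UNIV]] by simp
    qed
    finally show "(\<Sum>d\<in>?S. card (Bt (smul c u) \<inter> Bt (smul d v))) = (\<Sum>\<mu>\<in>?S. ?f \<mu>)" .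
  qed
  also have "\<dots> = (CARD('a) - 1) * (\<Sum>\<mu>\<in>?S. ?f \<mu>)"
    by (simp add: card_Diff_subset)
  finally show ?thesis using False by (simp add: rho_def)
qed

end
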